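(* Let $\mathcal F$ be a proper filter on $\omega$. Then $\mathcal F$ is a non-meager P-filter if and only if every $\mathcal F$-tree of finite sets has a branch whose union belongs to $\mathcal F$.
   Context: A filter on $\omega$ is a family $\mathcal F\subseteq\mathcal P(\omega)$ closed under finite intersections and supersets and containing all cofinite sets; it is proper if all its members are infinite. $\mathcal P(\omega)$ is identified with $2^\omega$ via characteristic functions, with the product topology of the discrete space $\{0,1\}$; "meager" refers to this topology. $X\subseteq^* Y$ means $X\setminus Y$ is finite. $\mathcal F$ is a P-filter if for every sequence $\langle X_n:n\in\omega\rangle\subseteq\mathcal F$ there is $X\in\mathcal F$ with $X\subseteq^* X_n$ for all $n$. Let $[\omega]^{<\omega}$ denote the set of finite subsets of $\omega$. A tree of finite sets is a set $T$ of finite sequences of elements of $[\omega]^{<\omega}$ containing the empty sequence and closed under initial segments; it is an $\mathcal F$-tree of finite sets if for each $\bar s\in T$ there is $X_{\bar s}\in\mathcal F$ such that $\bar s^\frown a\in T$ for every finite $a\subseteq X_{\bar s}$. A branch is an infinite sequence $\langle s_k:k\in\omega\rangle$ all of whose finite initial segments lie in $T$; its union is $\bigcup_k s_k$. *)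

theory Defs
  imports "HOL-Analysis.Analysis"
begin

definition cantor_top :: "(nat \<Rightarrow> bool) topology" where
  "cantor_top = product_topology (\<lambda>_. discrete_topology (UNIV :: bool set)) UNIV"

definition nowhere_dense_in :: "'a topology \<Rightarrow> 'a set \<Rightarrow> bool" where
  "nowhere_dense_in X S \<longleftrightarrow> S \<subseteq> topspace X \<and> X interior_of (X closure_of S) = {}"

definition meager_in :: "'a topology \<Rightarrow> 'a set \<Rightarrow> bool" where
  "meager_in X S \<longleftrightarrow> (\<exists>N :: nat \<Rightarrow> 'a set. (\<forall>n. nowhere_dense_in X (N n)) \<and> S \<subseteq> (\<Union>n. N n))"

text \<open>Identification of P(omega) with 2^omega via characteristic functions.\<close>
definition char_fun :: "nat set \<Rightarrow> (nat \<Rightarrow> bool)" where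
  "char_fun A = (\<lambda>n. n \<in> A)"

definition is_filter_on_omega :: "nat set set \<Rightarrow> bool" where
  "is_filter_on_omega F \<longleftrightarrow>
     (\<forall>X\<in>F. \<forall>Y\<in>F. X \<inter> Y \<in> F) \<and>
     (\<forall>X\<in>F. \<forall>Y. X \<subseteq> Y \<longrightarrow> Y \<in> F) \<and>
     (\<forall>X. finite (- X) \<longrightarrow> X \<in> F)"

definition proper_filter :: "nat set set \<Rightarrow> bool" where
  "proper_filter F \<longleftrightarrow> is_filter_on_omega F \<and> (\<forall>X\<in>F. infinite X)"

definition almost_subset :: "nat set \<Rightarrow> nat set \<Rightarrow> bool" where
  "almost_subset X Y \<longleftrightarrow> finite (X - Y)"

definition P_filter :: "nat set set \<Rightarrow> bool" where
  "P_filter F \<longleftrightarrow> (\<forall>Xs :: nat \<Rightarrow> nat set. (\<forall>n. Xs n \<in> F) \<longrightarrow>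
                    (\<exists>X\<in>F. \<forall>n. almost_subset X (Xs n)))"

definition non_meager_filter :: "nat set set \<Rightarrow> bool" where
  "non_meager_filter F \<longleftrightarrow> \<not> meager_in cantor_top (char_fun ` F)"

definition tree_of_finite_sets :: "nat set list set \<Rightarrow> bool" where
  "tree_of_finite_sets T \<longleftrightarrow>
     [] \<in> T \<and> (\<forall>s\<in>T. \<forall>a\<in>set s. finite a) \<and> (\<forall>s\<in>T. \<forall>k. take k s \<in> T)"

definition F_tree :: "nat set set \<Rightarrow> nat set list set \<Rightarrow> bool" where
  "F_tree F T \<longleftrightarrow> tree_of_finite_sets T \<and>
     (\<forall>s\<in>T. \<exists>X\<in>F. \<forall>a. finite a \<and> a \<subseteq> X \<longrightarrow> s @ [a] \<in> T)"

definition is_branch :: "nat set list set \<Rightarrow> (nat \<Rightarrow> nat set) \<Rightarrow> bool" where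
  "is_branch T b \<longleftrightarrow> (\<forall>k. map b [0..<k] \<in> T)"

definition branch_union :: "(nat \<Rightarrow> nat set) \<Rightarrow> nat set" where
  "branch_union b = (\<Union>k. b k)"

end

theory Submission
  imports Defs
begin


definition cyl :: "nat \<Rightarrow> (nat \<Rightarrow> bool) \<Rightarrow> (nat \<Rightarrow> bool) set" where
  "cyl n p = {f. \<forall>i<n. f i = p i}"

lemma topspace_cantor[simp]: "topspace cantor_top = UNIV"
  by (simp add: cantor_top_def PiE_UNIV_domain)

lemma openin_cyl: "openin cantor_top (cyl n p)"
  unfolding cantor_top_def openin_product_topology_alt
proof (intro ballI)
  fix x assume x: "x \<in> cyl n p"
  define U where "U = (\<lambda>i. if i < n then {p i} else (UNIV::bool set))"
  have "finite {i \<in> UNIV. U i \<noteq> topspace (discrete_topology UNIV)}"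
    by (rule finite_subset[of _ "{..<n}"]) (auto simp: U_def)
  moreover have "x \<in> Pi\<^sub>E UNIV U" using x by (auto simp: U_def cyl_def PiE_UNIV_domain)
  moreover have "Pi\<^sub>E UNIV U \<subseteq> cyl n p"
  proof
    fix y assume "y \<in> Pi\<^sub>E UNIV U"
    then have "\<And>i. y i \<in> U i" by (auto simp: PiE_UNIV_domain)
    then have "y i = p i" if "i < n" for i using that by (metis U_def singletonD)
    then show "y \<in> cyl n p" by (auto simp: cyl_def)
  qed
  ultimately show "\<exists>U. finite {i \<in> UNIV. U i \<noteq> topspace (discrete_topology UNIV)} \<and>
             (\<forall>i\<in>UNIV. openin (discrete_topology UNIV) (U i)) \<and> x \<in> Pi\<^sub>E UNIV U \<and> Pi\<^sub>E UNIV U \<subseteq> cyl n p"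
    by auto
qed

lemma cyl_in_open:
  assumes "openin cantor_top S" "x \<in> S"
  shows "\<exists>n. cyl n x \<subseteq> S"
proof -
  obtain U where U: "finite {i \<in> UNIV. U i \<noteq> topspace (discrete_topology (UNIV::bool set))}"
    "x \<in> Pi\<^sub>E UNIV U" "Pi\<^sub>E UNIV U \<subseteq> S"
    using assms unfolding cantor_top_def openin_product_topology_alt by blast
  have "finite {i. U i \<noteq> UNIV}" using U(1) by simp
  then obtain n where "{i. U i \<noteq> UNIV} \<subseteq> {..<n}" using finite_nat_bounded by blast
  then have n: "\<forall>i \<in> {i. U i \<noteq> UNIV}. i < n" by blast
  have "cyl n x \<subseteq> Pi\<^sub>E UNIV U"
  proof
    fix g assume g: "g \<in> cyl n x"
    have "g i \<in> U i" for i
    proof (cases "i < n")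
      case True then show ?thesis using g U(2) by (auto simp: cyl_def PiE_UNIV_domain)
    next
      case False then show ?thesis using n by auto
    qed
    then show "g \<in> Pi\<^sub>E UNIV U" by (auto simp: PiE_UNIV_domain)
  qed
  then show ?thesis using U(3) by blast
qed

lemma cyl_mono: "n \<le> n' \<Longrightarrow> (\<forall>i<n. q i = p i) \<Longrightarrow> cyl n' q \<subseteq> cyl n p"
  by (auto simp: cyl_def)

lemma nowhere_dense_cyl:
  assumes "nowhere_dense_in cantor_top N"
  shows "\<exists>n' q. n' \<ge> n \<and> (\<forall>i<n. q i = p i) \<and> cyl n' q \<inter> N = {}"
proof -
  have Nt: "N \<subseteq> topspace cantor_top" and E: "cantor_top interior_of (cantor_top closure_of N) = {}"
    using assms by (auto simp: nowhere_dense_in_def)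
  have "\<not> cyl n p \<subseteq> cantor_top closure_of N"
  proof
    assume "cyl n p \<subseteq> cantor_top closure_of N"
    then have "cyl n p = {}" using E openin_cyl unfolding interior_of_eq_empty by blast
    moreover have "p \<in> cyl n p" by (simp add: cyl_def)
    ultimately show False by blast
  qed
  then obtain f where f: "f \<in> cyl n p" "f \<notin> cantor_top closure_of N" by blast
  have "openin cantor_top (cyl n p - cantor_top closure_of N)"
    by (simp add: openin_cyl openin_diff)
  then obtain n2 where n2: "cyl n2 f \<subseteq> cyl n p - cantor_top closure_of N"
    using cyl_in_open f by blast
  have "cyl (max n n2) f \<subseteq> cyl n2 f" by (rule cyl_mono) auto
  moreover have "N \<subseteq> cantor_top closure_of N" using Nt closure_of_subset by blast
  ultimately have "cyl (max n n2) f \<inter> N = {}" using n2 by blast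
  moreover have "\<forall>i<n. f i = p i" using f by (simp add: cyl_def)
  ultimately show ?thesis by (intro exI[of _ "max n n2"] exI[of _ f]) auto
qed

lemma cyl_nowhere_dense:
  assumes "\<And>n p. \<exists>n' q. (\<forall>i<n. q i = p i) \<and> cyl n' q \<inter> N = {}"
  shows "nowhere_dense_in cantor_top N"
  unfolding nowhere_dense_in_def
proof (intro conjI)
  show "N \<subseteq> topspace cantor_top" by simp
  show "cantor_top interior_of (cantor_top closure_of N) = {}"
  proof (rule ccontr)
    assume "cantor_top interior_of (cantor_top closure_of N) \<noteq> {}"
    then obtain x where x: "x \<in> cantor_top interior_of (cantor_top closure_of N)" by blast
    moreover have "openin cantor_top (cantor_top interior_of (cantor_top closure_of N))"
      by (rule openin_interior_of)
    ultimately obtain n where n: "cyl n x \<subseteq> cantor_top interior_of (cantor_top closure_of N)"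
      using cyl_in_open by blast
    obtain n' q where q: "\<forall>i<n. q i = x i" "cyl n' q \<inter> N = {}" using assms[of n x] by blast
    have "cyl n' q \<inter> cantor_top closure_of N = {}"
      using q(2) openin_Int_closure_of_eq_empty[OF openin_cyl] by blast
    moreover have "q \<in> cyl n' q" by (simp add: cyl_def)
    moreover have "q \<in> cyl n x" using q(1) by (simp add: cyl_def)
    ultimately show False using n interior_of_subset[of cantor_top "cantor_top closure_of N"] by blast
  qed
qed



lemma ext_all:
  assumes N: "nowhere_dense_in cantor_top N" and S: "finite S"
  shows "\<exists>n \<tau>. n > m \<and> \<tau> \<subseteq> {m..<n} \<and> (\<forall>\<sigma>\<in>S. cyl n (\<lambda>i. i \<in> \<sigma> \<inter> {..<m} \<union> \<tau>) \<inter> N = {})"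
  using S
proof (induction S rule: finite_induct)
  case empty
  show ?case by (rule exI[of _ "Suc m"], rule exI[of _ "{}"]) auto
next
  case (insert \<sigma>0 S)
  then obtain n \<tau> where n: "n > m" "\<tau> \<subseteq> {m..<n}"
    "\<forall>\<sigma>\<in>S. cyl n (\<lambda>i. i \<in> \<sigma> \<inter> {..<m} \<union> \<tau>) \<inter> N = {}" by blast
  obtain n' q where q: "n' \<ge> n" "\<forall>i<n. q i = (i \<in> \<sigma>0 \<inter> {..<m} \<union> \<tau>)" "cyl n' q \<inter> N = {}"
    using nowhere_dense_cyl[OF N, of n "\<lambda>i. i \<in> \<sigma>0 \<inter> {..<m} \<union> \<tau>"] by blast
  define \<tau>' where "\<tau>' = \<tau> \<union> {i. n \<le> i \<and> i < n' \<and> q i}"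
  have t1: "\<tau>' \<subseteq> {m..<n'}" using n q(1) by (auto simp: \<tau>'_def)
  have t2: "i \<in> \<tau>' \<longleftrightarrow> i \<in> \<tau>" if "i < n" for i using that by (auto simp: \<tau>'_def)
  have "cyl n' (\<lambda>i. i \<in> \<sigma>0 \<inter> {..<m} \<union> \<tau>') = cyl n' q"
  proof -
    have "(i \<in> \<sigma>0 \<inter> {..<m} \<union> \<tau>') = q i" if "i < n'" for i
    proof (cases "i < n")
      case True then show ?thesis using q(2) t2 by auto
    next
      case False then show ?thesis using that n by (auto simp: \<tau>'_def)
    qed
    then show ?thesis by (auto simp: cyl_def)
  qed
  then have A: "cyl n' (\<lambda>i. i \<in> \<sigma>0 \<inter> {..<m} \<union> \<tau>') \<inter> N = {}" using q(3) by simp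
  have B: "cyl n' (\<lambda>i. i \<in> \<sigma> \<inter> {..<m} \<union> \<tau>') \<inter> N = {}" if "\<sigma> \<in> S" for \<sigma>
  proof -
    have "cyl n' (\<lambda>i. i \<in> \<sigma> \<inter> {..<m} \<union> \<tau>') \<subseteq> cyl n (\<lambda>i. i \<in> \<sigma> \<inter> {..<m} \<union> \<tau>)"
      by (rule cyl_mono) (use q(1) t2 in auto)
    then show ?thesis using n(3) that by blast
  qed
  show ?case using A B t1 n(1) q(1)
    by (intro exI[of _ n'] exI[of _ \<tau>']) auto
qed

lemma talagrand:
  assumes NM: "non_meager_filter F" and sm: "strict_mono (m::nat \<Rightarrow> nat)"
  shows "\<exists>Z\<in>F. \<forall>k. \<exists>j\<ge>k. Z \<inter> {m j..<m (Suc j)} = {}"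
proof (rule ccontr)
  assume H: "\<not> ?thesis"
  define Nk where "Nk k = {f. \<forall>j\<ge>k. \<exists>i\<in>{m j..<m (Suc j)}. f i}" for k
  have cov: "char_fun ` F \<subseteq> (\<Union>k. Nk k)"
  proof
    fix g assume "g \<in> char_fun ` F"
    then obtain Z where Z: "Z \<in> F" "g = char_fun Z" by blast
    then obtain k where "\<forall>j\<ge>k. Z \<inter> {m j..<m (Suc j)} \<noteq> {}" using H by blast
    then have "g \<in> Nk k" using Z(2) by (auto simp: Nk_def char_fun_def)
    then show "g \<in> (\<Union>k. Nk k)" by blast
  qed
  have nd: "nowhere_dense_in cantor_top (Nk k)" for k
  proof (rule cyl_nowhere_dense)
    fix n and p :: "nat \<Rightarrow> bool"
    define j where "j = max k n"
    define q where "q = (\<lambda>i. i < n \<and> p i)"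
    have "cyl (m (Suc j)) q \<inter> Nk k = {}"
    proof (rule ccontr)
      assume "cyl (m (Suc j)) q \<inter> Nk k \<noteq> {}"
      then obtain f where f: "f \<in> cyl (m (Suc j)) q" "f \<in> Nk k" by blast
      have "j \<ge> k" by (simp add: j_def)
      then obtain i where i: "i \<in> {m j..<m (Suc j)}" "f i" using f(2) by (auto simp: Nk_def)
      have "f i = q i" using f(1) i(1) by (auto simp: cyl_def)
      then have "i < n" using i(2) by (simp add: q_def)
      moreover have "m j \<ge> j" using sm by (rule seq_suble)
      ultimately show False using i(1) by (simp add: j_def)
    qed
    moreover have "\<forall>i<n. q i = p i" by (simp add: q_def)
    ultimately show "\<exists>n' q. (\<forall>i<n. q i = p i) \<and> cyl n' q \<inter> Nk k = {}" by blast
  qed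
  have "meager_in cantor_top (char_fun ` F)"
    unfolding meager_in_def using cov nd by blast
  then show False using NM by (simp add: non_meager_filter_def)
qed



lemma filt_inter:
  assumes "proper_filter F" "finite S" "\<forall>x\<in>S. A x \<in> F"
  shows "\<Inter>(A ` S) \<in> F"
  using assms(2,3)
proof (induction S rule: finite_induct)
  case empty
  have "finite (- (UNIV::nat set))" by simp
  then show ?case using assms(1) unfolding proper_filter_def is_filter_on_omega_def by blast
next
  case (insert x S)
  then have "A x \<in> F" "\<Inter>(A ` S) \<in> F" by auto
  then have "A x \<inter> \<Inter>(A ` S) \<in> F" using assms(1) unfolding proper_filter_def is_filter_on_omega_def by blast
  then show ?case by simp
qed

lemma filt_int2: "proper_filter F \<Longrightarrow> X \<in> F \<Longrightarrow> Y \<in> F \<Longrightarrow> X \<inter> Y \<in> F"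
  unfolding proper_filter_def is_filter_on_omega_def by blast

lemma filt_sup: "proper_filter F \<Longrightarrow> X \<in> F \<Longrightarrow> X \<subseteq> Y \<Longrightarrow> Y \<in> F"
  unfolding proper_filter_def is_filter_on_omega_def by blast

lemma filt_cof: "proper_filter F \<Longrightarrow> {n::nat..} \<in> F"
proof -
  assume "proper_filter F"
  moreover have "finite (- {n..})" by simp
  ultimately show ?thesis unfolding proper_filter_def is_filter_on_omega_def by blast
qed

lemma dir1:
  assumes PF: "proper_filter F" and NM: "non_meager_filter F" and PP: "P_filter F"
    and FT: "F_tree F T"
  shows "\<exists>b. is_branch T b \<and> branch_union b \<in> F"
proof -
  define Xf where "Xf t = (SOME X. X \<in> F \<and> (\<forall>a. finite a \<and> a \<subseteq> X \<longrightarrow> t @ [a] \<in> T))" for t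
  have Xf: "Xf t \<in> F \<and> (\<forall>a. finite a \<and> a \<subseteq> Xf t \<longrightarrow> t @ [a] \<in> T)" if "t \<in> T" for t
  proof -
    have "\<exists>X. X \<in> F \<and> (\<forall>a. finite a \<and> a \<subseteq> X \<longrightarrow> t @ [a] \<in> T)"
      using FT that unfolding F_tree_def by blast
    then show ?thesis unfolding Xf_def by (rule someI_ex)
  qed
  have Tnil: "[] \<in> T" using FT by (simp add: F_tree_def tree_of_finite_sets_def)
  define Lists where "Lists m = {t. set t \<subseteq> Pow {..<m} \<and> length t \<le> m}" for m :: nat
  have finL: "finite (Lists m)" for m
    unfolding Lists_def by (rule finite_lists_length_le) simp
  define W where "W m = \<Inter>(Xf ` (T \<inter> Lists m))" for m
  have WF: "W m \<in> F" for m
    unfolding W_def by (rule filt_inter[OF PF]) (use finL Xf in auto)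
  have WX: "W m \<subseteq> Xf t" if "t \<in> T" "t \<in> Lists m" for t m
    using that unfolding W_def by blast
  obtain X where X: "X \<in> F" "\<forall>m. almost_subset X (W m)"
    using PP WF unfolding P_filter_def by blast
  define nW where "nW m = (SOME n. \<forall>x \<in> X - W m. x < n)" for m
  have nW: "X \<inter> {nW m..} \<subseteq> W m" for m
  proof -
    have "finite (X - W m)" using X(2) by (simp add: almost_subset_def)
    then obtain n where "X - W m \<subseteq> {..<n}" using finite_nat_bounded by blast
    then have "\<exists>n. \<forall>x \<in> X - W m. x < n" by blast
    then have "\<forall>x \<in> X - W m. x < nW m" unfolding nW_def by (rule someI_ex)
    then show ?thesis by (meson Diff_iff Int_iff atLeast_iff not_le subsetI)
  qed
  define g where "g m = max (Suc m) (nW m)" for m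
  define mm where "mm j = (g ^^ j) 1" for j
  have mm0: "mm 0 = 1" and mmS: "mm (Suc j) = g (mm j)" for j by (simp_all add: mm_def)
  have smm: "strict_mono mm"
    unfolding strict_mono_Suc_iff using mmS by (simp add: g_def less_max_iff_disj)
  have mmge: "mm j \<ge> Suc j" for j
    by (induction j) (use mm0 mmS g_def in auto)
  obtain Z where Z: "Z \<in> F" "\<forall>k. \<exists>j\<ge>k. Z \<inter> {mm j..<mm (Suc j)} = {}"
    using talagrand[OF NM smm] by blast
  define A where "A = {j. Z \<inter> {mm j..<mm (Suc j)} = {}}"
  have infA: "infinite A"
    unfolding infinite_nat_iff_unbounded_le A_def using Z(2) by blast
  define a where "a = enumerate A"
  have sa: "strict_mono a" unfolding a_def using infA by (rule strict_mono_enumerate)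
  have aA: "a k \<in> A" for k unfolding a_def using infA by (rule enumerate_in_set)
  define c where "c k = mm (a k)" for k
  have sc: "strict_mono c" unfolding c_def using smm sa by (simp add: strict_mono_def)
  have cge: "c k \<ge> Suc k" for k
    using mmge[of "a k"] seq_suble[OF sa, of k] unfolding c_def by linarith
  define Y where "Y = X \<inter> Z"
  define b where "b k = (case k of 0 \<Rightarrow> Y \<inter> {nW 0..<c 0} | Suc k' \<Rightarrow> Y \<inter> {c k'..<c (Suc k')})" for k
  have b0: "b 0 = Y \<inter> {nW 0..<c 0}" and bS: "b (Suc k) = Y \<inter> {c k..<c (Suc k)}" for k
    by (simp_all add: b_def)
  have bfin: "finite (b k)" for k by (cases k) (simp_all add: b0 bS)
  have bbound: "b k \<subseteq> {..<c k}" for k by (cases k) (auto simp: b0 bS)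
  have bsub: "b k \<subseteq> Xf (map b [0..<k])" if "map b [0..<k] \<in> T" for k
  proof (cases k)
    case 0
    have "[] \<in> Lists 0" by (simp add: Lists_def)
    then have "W 0 \<subseteq> Xf []" using WX Tnil by blast
    moreover have "b 0 \<subseteq> X \<inter> {nW 0..}" unfolding b0 Y_def by auto
    ultimately have "b 0 \<subseteq> Xf []" using nW[of 0] by blast
    then show ?thesis using 0 by simp
  next
    case (Suc k')
    let ?s = "map b [0..<Suc k']"
    have sT: "?s \<in> T" using that Suc by simp
    have "?s \<in> Lists (c k')"
    proof -
      have bi: "b i \<subseteq> {..<c k'}" if "i \<le> k'" for i
      proof -
        have "c i \<le> c k'" using strict_mono_less_eq[OF sc] that by simp
        then show ?thesis using bbound[of i] by auto
      qed
      have "A \<in> Pow {..<c k'}" if "A \<in> set ?s" for A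
      proof -
        from that obtain i where "i < Suc k'" "A = b i" by (auto simp del: upt_Suc)
        then show ?thesis using bi[of i] by auto
      qed
      then have "set ?s \<subseteq> Pow {..<c k'}" by blast
      moreover have "length ?s \<le> c k'" using cge[of k'] by simp
      ultimately show ?thesis by (simp add: Lists_def)
    qed
    then have W1: "W (c k') \<subseteq> Xf ?s" using WX[OF sT] by blast
    have "b (Suc k') \<subseteq> X \<inter> {nW (c k')..}"
    proof
      fix y assume y: "y \<in> b (Suc k')"
      then have yZ: "y \<in> Z" "y \<in> X" "y \<ge> mm (a k')" by (auto simp: bS Y_def c_def)
      have "Z \<inter> {mm (a k')..<mm (Suc (a k'))} = {}" using aA[of k'] by (simp add: A_def)
      then have "y \<notin> {mm (a k')..<mm (Suc (a k'))}" using yZ(1) by blast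
      then have "y \<ge> mm (Suc (a k'))" using yZ(3) by simp
      then have "y \<ge> nW (c k')" by (simp add: mmS g_def c_def)
      then show "y \<in> X \<inter> {nW (c k')..}" using yZ by simp
    qed
    then have "b (Suc k') \<subseteq> W (c k')" using nW[of "c k'"] by blast
    then have "b (Suc k') \<subseteq> Xf ?s" using W1 by blast
    then show ?thesis using Suc by simp
  qed
  have br: "map b [0..<k] \<in> T" for k
  proof (induction k)
    case 0 then show ?case using Tnil by simp
  next
    case (Suc k)
    have "map b [0..<Suc k] = map b [0..<k] @ [b k]" by simp
    then show ?case using Xf[OF Suc] bsub[OF Suc] bfin by metis
  qed
  have "Y \<inter> {nW 0 + c 0..} \<subseteq> branch_union b"
  proof
    fix y assume y: "y \<in> Y \<inter> {nW 0 + c 0..}"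
    have ex: "\<exists>j. y < c j" using cge[of y] by (intro exI[of _ y]) simp
    define j where "j = (LEAST j. y < c j)"
    have j1: "y < c j" unfolding j_def using ex by (rule LeastI_ex)
    have "j \<noteq> 0"
    proof
      assume "j = 0" then show False using j1 y by simp
    qed
    then obtain k where k: "j = Suc k" using not0_implies_Suc by blast
    have "\<not> y < c k" using not_less_Least[of k "\<lambda>j. y < c j"] k unfolding j_def by simp
    then have "y \<in> b (Suc k)" using j1 k y by (simp add: bS)
    then show "y \<in> branch_union b" by (auto simp: branch_union_def)
  qed
  moreover have "Y \<inter> {nW 0 + c 0..} \<in> F"
    unfolding Y_def by (intro filt_int2[OF PF] filt_cof[OF PF] X Z)
  ultimately have "branch_union b \<in> F" using filt_sup[OF PF] by blast
  then show ?thesis using br by (auto simp: is_branch_def)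
qed



fun Mr :: "(nat \<Rightarrow> nat \<Rightarrow> nat) \<Rightarrow> nat set list \<Rightarrow> nat" where
  "Mr nn [] = 0"
| "Mr nn (a # r) = nn (length r) (Mr nn r) + Suc (\<Sum> a)"

definition Mf :: "(nat \<Rightarrow> nat \<Rightarrow> nat) \<Rightarrow> nat set list \<Rightarrow> nat" where
  "Mf nn s = Mr nn (rev s)"

lemma Mf_snoc: "Mf nn (s @ [a]) = nn (length s) (Mf nn s) + Suc (\<Sum> a)"
  by (simp add: Mf_def)

lemma dir2P:
  assumes PF: "proper_filter F"
    and H: "\<forall>T. F_tree F T \<longrightarrow> (\<exists>b. is_branch T b \<and> branch_union b \<in> F)"
  shows "P_filter F"
  unfolding P_filter_def
proof (intro allI impI)
  fix Xs :: "nat \<Rightarrow> nat set" assume Xs: "\<forall>n. Xs n \<in> F"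
  define Ys where "Ys n = \<Inter>(Xs ` {..n})" for n
  have YF: "Ys n \<in> F" for n unfolding Ys_def by (rule filt_inter[OF PF]) (use Xs in auto)
  define T where "T = {s. \<forall>i<length s. finite (s!i) \<and> s!i \<subseteq> Ys i}"
  have "F_tree F T"
    unfolding F_tree_def tree_of_finite_sets_def
  proof (intro conjI ballI allI)
    show "[] \<in> T" by (simp add: T_def)
  next
    fix s a assume "s \<in> T" "a \<in> set s"
    then show "finite a" by (auto simp: T_def in_set_conv_nth)
  next
    fix s k assume "s \<in> T"
    then show "take k s \<in> T" by (auto simp: T_def)
  next
    fix s assume s: "s \<in> T"
    have "\<forall>a. finite a \<and> a \<subseteq> Ys (length s) \<longrightarrow> s @ [a] \<in> T"
    proof (intro allI impI)
      fix a assume a: "finite a \<and> a \<subseteq> Ys (length s)"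
      show "s @ [a] \<in> T" unfolding T_def
      proof (intro CollectI allI impI)
        fix i assume "i < length (s @ [a])"
        then have "i < length s \<or> i = length s" by auto
        then show "finite ((s @ [a]) ! i) \<and> (s @ [a]) ! i \<subseteq> Ys i"
          using s a by (auto simp: T_def nth_append)
      qed
    qed
    then show "\<exists>X\<in>F. \<forall>a. finite a \<and> a \<subseteq> X \<longrightarrow> s @ [a] \<in> T" using YF by blast
  qed
  then obtain b where b: "is_branch T b" "branch_union b \<in> F" using H by blast
  have bk: "finite (b k) \<and> b k \<subseteq> Ys k" for k
  proof -
    have "map b [0..<Suc k] \<in> T" using b(1) by (simp only: is_branch_def)
    then have "\<forall>i<Suc k. finite (map b [0..<Suc k] ! i) \<and> map b [0..<Suc k] ! i \<subseteq> Ys i"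
      by (simp add: T_def)
    then have "finite (map b [0..<Suc k] ! k) \<and> map b [0..<Suc k] ! k \<subseteq> Ys k" by blast
    moreover have "map b [0..<Suc k] ! k = b k" by (simp del: upt_Suc)
    ultimately show ?thesis by simp
  qed
  have "almost_subset (branch_union b) (Xs n)" for n
  proof -
    have "branch_union b - Xs n \<subseteq> (\<Union>k<n. b k)"
    proof
      fix x assume x: "x \<in> branch_union b - Xs n"
      then obtain k where k: "x \<in> b k" by (auto simp: branch_union_def)
      have "k < n"
      proof (rule ccontr)
        assume "\<not> k < n"
        then have "Ys k \<subseteq> Xs n" by (auto simp: Ys_def)
        then show False using k bk[of k] x by blast
      qed
      then show "x \<in> (\<Union>k<n. b k)" using k by blast
    qed
    moreover have "finite (\<Union>k<n. b k)" using bk by simp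
    ultimately show ?thesis unfolding almost_subset_def by (rule finite_subset)
  qed
  then show "\<exists>X\<in>F. \<forall>n. almost_subset X (Xs n)" using b(2) by blast
qed

lemma dir2M:
  assumes PF: "proper_filter F"
    and H: "\<forall>T. F_tree F T \<longrightarrow> (\<exists>b. is_branch T b \<and> branch_union b \<in> F)"
  shows "non_meager_filter F"
  unfolding non_meager_filter_def
proof
  assume "meager_in cantor_top (char_fun ` F)"
  then obtain N :: "nat \<Rightarrow> (nat \<Rightarrow> bool) set" where N: "\<forall>n. nowhere_dense_in cantor_top (N n)" "char_fun ` F \<subseteq> (\<Union>n. N n)"
    unfolding meager_in_def by blast
  define Q where "Q k m p = (fst p > m \<and> snd p \<subseteq> {m..<fst p} \<and>
      (\<forall>\<sigma>\<in>Pow {..<m}. cyl (fst p) (\<lambda>i. i \<in> \<sigma> \<inter> {..<m} \<union> snd p) \<inter> N k = {}))" for k m p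
  have "\<forall>k. \<exists>g. \<forall>m. Q k m (g m)"
  proof (intro allI choice)
    fix k m
    have "finite (Pow {..<m::nat})" by simp
    from ext_all[OF N(1)[rule_format, of k] this, of m]
    obtain n \<tau> where "n > m \<and> \<tau> \<subseteq> {m..<n} \<and>
      (\<forall>\<sigma>\<in>Pow {..<m}. cyl n (\<lambda>i. i \<in> \<sigma> \<inter> {..<m} \<union> \<tau>) \<inter> N k = {})" by blast
    then have "Q k m (n, \<tau>)" by (simp add: Q_def)
    then show "\<exists>p. Q k m p" by blast
  qed
  from choice[OF this] obtain f where f: "\<forall>k m. Q k m (f k m)" by blast
  define nn where "nn k m = fst (f k m)" for k m
  define tau where "tau k m = snd (f k m)" for k m
  have nt: "\<And>k m. nn k m > m" "\<And>k m. tau k m \<subseteq> {m..<nn k m}"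
    "\<And>k m \<sigma>. \<sigma> \<subseteq> {..<m} \<Longrightarrow> cyl (nn k m) (\<lambda>i. i \<in> \<sigma> \<inter> {..<m} \<union> tau k m) \<inter> N k = {}"
    using f unfolding Q_def nn_def tau_def by auto
  define T where "T = {s. \<forall>i<length s. finite (s!i) \<and> s!i \<subseteq> {nn i (Mf nn (take i s))..}}"
  have "F_tree F T"
    unfolding F_tree_def tree_of_finite_sets_def
  proof (intro conjI ballI allI)
    show "[] \<in> T" by (simp add: T_def)
  next
    fix s a assume "s \<in> T" "a \<in> set s"
    then show "finite a" by (auto simp: T_def in_set_conv_nth)
  next
    fix s k assume "s \<in> T"
    then show "take k s \<in> T" by (auto simp: T_def)
  next
    fix s assume s: "s \<in> T"
    have "\<forall>a. finite a \<and> a \<subseteq> {nn (length s) (Mf nn s)..} \<longrightarrow> s @ [a] \<in> T"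
    proof (intro allI impI)
      fix a assume a: "finite a \<and> a \<subseteq> {nn (length s) (Mf nn s)..}"
      show "s @ [a] \<in> T" unfolding T_def
      proof (intro CollectI allI impI)
        fix i assume "i < length (s @ [a])"
        then have "i < length s \<or> i = length s" by auto
        then show "finite ((s @ [a]) ! i) \<and> (s @ [a]) ! i \<subseteq> {nn i (Mf nn (take i (s @ [a])))..}"
          using s a by (auto simp: T_def nth_append)
      qed
    qed
    then show "\<exists>X\<in>F. \<forall>a. finite a \<and> a \<subseteq> X \<longrightarrow> s @ [a] \<in> T" using filt_cof[OF PF] by blast
  qed
  then obtain b where b: "is_branch T b" "branch_union b \<in> F" using H by blast
  define mu where "mu k = Mf nn (map b [0..<k])" for k
  define nu where "nu k = nn k (mu k)" for k
  have bk: "finite (b k) \<and> b k \<subseteq> {nu k..}" for k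
  proof -
    have "map b [0..<Suc k] \<in> T" using b(1) by (simp only: is_branch_def)
    then have "\<forall>i<Suc k. finite (map b [0..<Suc k] ! i) \<and> map b [0..<Suc k] ! i \<subseteq> {nn i (Mf nn (take i (map b [0..<Suc k])))..}"
      by (simp add: T_def)
    then have "finite (map b [0..<Suc k] ! k) \<and> map b [0..<Suc k] ! k \<subseteq> {nn k (Mf nn (take k (map b [0..<Suc k])))..}" by blast
    moreover have "map b [0..<Suc k] ! k = b k" by (simp del: upt_Suc)
    moreover have "take k (map b [0..<Suc k]) = map b [0..<k]" by (simp add: take_map)
    ultimately show ?thesis by (simp add: nu_def mu_def)
  qed
  have muS: "mu (Suc k) = nu k + Suc (\<Sum> (b k))" for k
    by (simp add: mu_def nu_def Mf_snoc)
  have bup: "b k \<subseteq> {..<mu (Suc k)}" for k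
  proof
    fix x assume "x \<in> b k"
    then have "x \<le> \<Sum> (b k)" using bk[of k] member_le_sum[of x "b k" "\<lambda>x. x"] by simp
    then show "x \<in> {..<mu (Suc k)}" by (simp add: muS)
  qed
  have munu: "mu k < nu k" for k using nt(1) by (simp add: nu_def)
  have numu: "nu k < mu (Suc k)" for k by (simp add: muS)
  have smu: "strict_mono mu" unfolding strict_mono_Suc_iff using munu numu less_trans by blast
  have numono: "nu k \<le> nu j" if "k \<le> j" for k j
  proof (cases "k = j")
    case False
    then have "Suc k \<le> j" using that by simp
    then have "mu (Suc k) \<le> mu j" using strict_mono_less_eq[OF smu] by simp
    then show ?thesis using munu[of j] numu[of k] by simp
  qed simp
  define tk where "tk k = tau k (mu k)" for k
  have tk: "tk k \<subseteq> {mu k..<nu k}" for k using nt(2) by (simp add: tk_def nu_def)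
  define U where "U = branch_union b \<union> (\<Union>k. tk k)"
  have UF: "U \<in> F" unfolding U_def using b(2) filt_sup[OF PF] by blast
  then obtain k where k: "char_fun U \<in> N k" using N(2) by blast
  define \<sigma> where "\<sigma> = U \<inter> {..<mu k}"
  have cy: "cyl (nu k) (\<lambda>i. i \<in> \<sigma> \<inter> {..<mu k} \<union> tk k) \<inter> N k = {}"
    using nt(3)[of \<sigma> "mu k" k] by (simp add: \<sigma>_def tk_def nu_def)
  have "char_fun U \<in> cyl (nu k) (\<lambda>i. i \<in> \<sigma> \<inter> {..<mu k} \<union> tk k)"
    unfolding cyl_def char_fun_def
  proof (intro CollectI allI impI)
    fix i assume i: "i < nu k"
    show "(i \<in> U) = (i \<in> \<sigma> \<inter> {..<mu k} \<union> tk k)"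
    proof (cases "i < mu k")
      case True
      then show ?thesis using tk[of k] by (auto simp: \<sigma>_def)
    next
      case False
      have nb: "i \<notin> b j" for j
      proof (cases "j < k")
        case True
        then have "mu (Suc j) \<le> mu k" using strict_mono_less_eq[OF smu] by simp
        then show ?thesis using bup[of j] False by auto
      next
        case False
        then have "nu k \<le> nu j" using numono by simp
        then show ?thesis using bk[of j] i by auto
      qed
      have nt2: "i \<notin> tk j" if "j \<noteq> k" for j
      proof (cases "j < k")
        case True
        then have "mu (Suc j) \<le> mu k" using strict_mono_less_eq[OF smu] by simp
        then show ?thesis using tk[of j] numu[of j] \<open>\<not> i < mu k\<close> by auto
      next
        case False
        then have "Suc k \<le> j" using that by simp
        then have "mu (Suc k) \<le> mu j" using strict_mono_less_eq[OF smu] by simp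
        then show ?thesis using tk[of j] numu[of k] i by auto
      qed
      have "(i \<in> U) = (i \<in> tk k)"
      proof
        assume "i \<in> U"
        then obtain j where j: "i \<in> tk j" using nb by (auto simp: U_def branch_union_def)
        then show "i \<in> tk k" using nt2[of j] by (cases "j = k") auto
      next
        assume "i \<in> tk k" then show "i \<in> U" by (auto simp: U_def)
      qed
      then show ?thesis using False by simp
    qed
  qed
  then show False using cy k by blast
qed


theorem lemma1p3:
  assumes "proper_filter F"
  shows "(non_meager_filter F \<and> P_filter F) \<longleftrightarrow>
         (\<forall>T. F_tree F T \<longrightarrow> (\<exists>b. is_branch T b \<and> branch_union b \<in> F))"
proof
  assume "non_meager_filter F \<and> P_filter F"
  then show "\<forall>T. F_tree F T \<longrightarrow> (\<exists>b. is_branch T b \<and> branch_union b \<in> F)"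
    using dir1[OF assms] by blast
next
  assume H: "\<forall>T. F_tree F T \<longrightarrow> (\<exists>b. is_branch T b \<and> branch_union b \<in> F)"
  show "non_meager_filter F \<and> P_filter F"
    using dir2M[OF assms H] dir2P[OF assms H] by blast
qed

end
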